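(* Let $S$ be a finite poset containing a subposet (with induced order) isomorphic to $W^{2k}$ for some $k\ge2$, and suppose $f_S$ is positive semidefinite. Then $C(f_S)\ne\varnothing$.
   Context: $f_S(x)=\sum_i x_i^2+\sum_{s_i<s_j}x_ix_j$. $H_n=\{x:\sum x_i=0\}$; $C(f)$ is the set of $h\in H_n\setminus\{0\}$ with either all $\partial f/\partial x_i(h)\le0$ or all $\ge0$. $W^{2k}=\{s_1^-,\dots,s_k^-,s_1^+,\dots,s_k^+\}$ whose only strict relations are $s_i^-<s_i^+$ ($1\le i\le k$), $s_i^-<s_{i+1}^+$ ($1\le i\le k-1$), $s_k^-<s_1^+$. *)

theory Defs
  imports "HOL-Analysis.Analysis"
begin

definition fS :: "('a::{order,finite} \<Rightarrow> real) \<Rightarrow> real" where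
  "fS x = (\<Sum>i\<in>UNIV. (x i)^2) + (\<Sum>i\<in>UNIV. \<Sum>j\<in>{j. i < j}. x i * x j)"

definition partial_deriv :: "(('a \<Rightarrow> real) \<Rightarrow> real) \<Rightarrow> 'a \<Rightarrow> ('a \<Rightarrow> real) \<Rightarrow> real" where
  "partial_deriv f i x = deriv (\<lambda>t. f (x(i := t))) (x i)"

definition psd :: "(('a \<Rightarrow> real) \<Rightarrow> real) \<Rightarrow> bool" where
  "psd f \<longleftrightarrow> (\<forall>x. f x \<ge> 0)"

definition Cset :: "(('a::finite \<Rightarrow> real) \<Rightarrow> real) \<Rightarrow> ('a \<Rightarrow> real) set" where
  "Cset f = {h. (\<Sum>i\<in>UNIV. h i) = 0 \<and> h \<noteq> (\<lambda>_. 0) \<and>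
      ((\<forall>i. partial_deriv f i h \<le> 0) \<or> (\<forall>i. partial_deriv f i h \<ge> 0))}"

text \<open>The poset W^{2k}: elements (False, i) = s_i^-, (True, i) = s_i^+ for 1 \<le> i \<le> k.
  Strict order: s_i^- < s_i^+, s_i^- < s_{i+1}^+ (i < k), s_k^- < s_1^+.\<close>
definition W_elems :: "nat \<Rightarrow> (bool \<times> nat) set" where
  "W_elems k = UNIV \<times> {1..k}"

definition W_less :: "nat \<Rightarrow> bool \<times> nat \<Rightarrow> bool \<times> nat \<Rightarrow> bool" where
  "W_less k p q \<longleftrightarrow> p \<in> W_elems k \<and> q \<in> W_elems k \<and> \<not> fst p \<and> fst q \<and>
     (snd q = snd p \<or> (snd p < k \<and> snd q = snd p + 1) \<or> (snd p = k \<and> snd q = 1))"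

definition contains_W :: "nat \<Rightarrow> 'a::order itself \<Rightarrow> bool" where
  "contains_W k _ \<longleftrightarrow> (\<exists>m :: bool \<times> nat \<Rightarrow> 'a. inj_on m (W_elems k) \<and>
     (\<forall>p\<in>W_elems k. \<forall>q\<in>W_elems k. m p < m q \<longleftrightarrow> W_less k p q))"

end

theory Submission
  imports Defs
begin

lemma if_deriv: "((\<lambda>t::real. if P then t else c) has_real_derivative (if P then 1 else 0)) (at x)"
  by (cases P) (auto intro: derivative_eq_intros)

lemma if_diff: "(\<lambda>t::real. if P then t else c) differentiable (at x)"
  by (cases P) auto

lemma fS_diff:
  "(\<lambda>t. fS ((h::'a::{order,finite} \<Rightarrow> real)(i := t))) differentiable (at x)"
  unfolding fS_def fun_upd_def
  by (intro differentiable_sum differentiable_add differentiable_mult differentiable_power if_diff ballI finite)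

lemma fS_deriv_ex:
  "\<exists>D. ((\<lambda>t. fS ((h::'a::{order,finite} \<Rightarrow> real)(i := t))) has_real_derivative D) (at x)"
  using fS_diff real_differentiable_def by blast

lemma zero_crit:
  assumes "psd (fS :: ('a::{order,finite} \<Rightarrow> real) \<Rightarrow> real)" and "fS h = 0"
  shows "partial_deriv fS i (h::'a \<Rightarrow> real) = 0"
proof -
  obtain D where D: "((\<lambda>t. fS (h(i := t))) has_real_derivative D) (at (h i))"
    using fS_deriv_ex by blast
  have "D = 0"
  proof (rule DERIV_local_min[OF D, of 1])
    show "\<forall>y. \<bar>h i - y\<bar> < 1 \<longrightarrow> fS (h(i := h i)) \<le> fS (h(i := y))"
      using assms unfolding psd_def by simp
  qed simp
  then show ?thesis unfolding partial_deriv_def using DERIV_imp_deriv[OF D] by simp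
qed

lemma sum_image_vanish:
  fixes g :: "'a::finite \<Rightarrow> real"
  assumes "inj_on m W" "\<And>x. x \<notin> m ` W \<Longrightarrow> g x = 0"
  shows "(\<Sum>x\<in>UNIV. g x) = (\<Sum>p\<in>W. g (m p))"
proof -
  have "(\<Sum>x\<in>UNIV. g x) = (\<Sum>x\<in>m ` W. g x)"
    by (rule sum.mono_neutral_right) (use assms in auto)
  also have "\<dots> = (\<Sum>p\<in>W. g (m p))"
    by (rule sum.reindex_cong[OF assms(1)]) auto
  finally show ?thesis .
qed

lemma sum_W:
  fixes F :: "bool \<times> nat \<Rightarrow> real"
  shows "(\<Sum>p\<in>W_elems k. F p) = (\<Sum>i\<in>{1..k}. F (False, i) + F (True, i))"
proof -
  have "(\<Sum>p\<in>W_elems k. F p) = (\<Sum>b\<in>UNIV. \<Sum>i\<in>{1..k}. F (b, i))"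
    unfolding W_elems_def by (simp add: sum.cartesian_product)
  also have "\<dots> = (\<Sum>i\<in>{1..k}. F (False, i) + F (True, i))"
    by (simp add: UNIV_bool sum.distrib)
  finally show ?thesis .
qed

lemma card_nb:
  fixes k i :: nat
  assumes "k \<ge> 2" "i \<in> {1..k}"
  shows "(\<Sum>j\<in>{1..k}. (if j = i \<or> (i < k \<and> j = i + 1) \<or> (i = k \<and> j = 1) then -1 else 0)) = (-2::real)"
proof -
  have e: "{j\<in>{1..k}. j = i \<or> (i < k \<and> j = i + 1) \<or> (i = k \<and> j = 1)} = {i, if i < k then i + 1 else 1}"
    using assms by auto
  have c: "card {i, if i < k then i + 1 else 1} = 2"
    using assms by auto
  have "(\<Sum>j\<in>{1..k}. (if j = i \<or> (i < k \<and> j = i + 1) \<or> (i = k \<and> j = 1) then -1 else 0))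
      = (\<Sum>j\<in>{j\<in>{1..k}. j = i \<or> (i < k \<and> j = i + 1) \<or> (i = k \<and> j = 1)}. (-1::real))"
    by (rule sum.inter_filter[symmetric]) simp
  also have "\<dots> = -2" unfolding e using c by simp
  finally show ?thesis .
qed

theorem lemma10:
  fixes k :: nat
  assumes "k \<ge> 2"
    and "contains_W k TYPE('a::{order,finite})"
    and "psd (fS :: ('a \<Rightarrow> real) \<Rightarrow> real)"
  shows "Cset (fS :: ('a \<Rightarrow> real) \<Rightarrow> real) \<noteq> {}"
proof -
  define W where "W = W_elems k"
  obtain m :: "bool \<times> nat \<Rightarrow> 'a" where inj: "inj_on m W"
    and ord: "\<And>p q. p \<in> W \<Longrightarrow> q \<in> W \<Longrightarrow> m p < m q \<longleftrightarrow> W_less k p q"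
    using assms(2) unfolding contains_W_def W_def by blast
  define hh :: "bool \<times> nat \<Rightarrow> real" where "hh p = (if fst p then -1 else 1)" for p
  define h :: "'a \<Rightarrow> real" where "h x = (if x \<in> m ` W then hh (inv_into W m x) else 0)" for x
  have hm: "h (m p) = hh p" if "p \<in> W" for p
    using that inj unfolding h_def by auto
  have h0: "h x = 0" if "x \<notin> m ` W" for x using that unfolding h_def by simp
  have sum0: "(\<Sum>x\<in>UNIV. h x) = 0"
  proof -
    have "(\<Sum>x\<in>UNIV. h x) = (\<Sum>p\<in>W. h (m p))"
      by (rule sum_image_vanish[OF inj]) (simp add: h0)
    also have "\<dots> = (\<Sum>p\<in>W. hh p)" using hm by simp
    also have "\<dots> = 0" unfolding W_def sum_W by (simp add: hh_def)
    finally show ?thesis .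
  qed
  have sq: "(\<Sum>x\<in>UNIV. (h x)^2) = 2 * real k"
  proof -
    have "(\<Sum>x\<in>UNIV. (h x)^2) = (\<Sum>p\<in>W. (h (m p))^2)"
      by (rule sum_image_vanish[OF inj]) (simp add: h0)
    also have "\<dots> = (\<Sum>p\<in>W. (hh p)^2)" using hm by simp
    also have "\<dots> = 2 * real k" unfolding W_def sum_W by (simp add: hh_def)
    finally show ?thesis .
  qed
  have dbl: "(\<Sum>x\<in>UNIV. \<Sum>y\<in>{y. x < y}. h x * h y) = - 2 * real k"
  proof -
    have "(\<Sum>x\<in>UNIV. \<Sum>y\<in>{y. x < y}. h x * h y)
        = (\<Sum>x\<in>UNIV. \<Sum>y\<in>UNIV. if x < y then h x * h y else 0)"
      by (rule sum.cong[OF refl], subst sum.inter_filter[symmetric]) auto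
    also have "\<dots> = (\<Sum>p\<in>W. \<Sum>y\<in>UNIV. if m p < y then h (m p) * h y else 0)"
    proof (rule sum_image_vanish[OF inj])
      fix x assume "x \<notin> m ` W"
      then have "h x = 0" by (rule h0)
      then show "(\<Sum>y\<in>UNIV. if x < y then h x * h y else 0) = 0"
        by (intro sum.neutral ballI) (simp add: \<open>h x = 0\<close>)
    qed
    also have "\<dots> = (\<Sum>p\<in>W. \<Sum>q\<in>W. if m p < m q then h (m p) * h (m q) else 0)"
      by (rule sum.cong[OF refl], rule sum_image_vanish[OF inj]) (simp add: h0)
    also have "\<dots> = (\<Sum>p\<in>W. \<Sum>q\<in>W. if W_less k p q then hh p * hh q else 0)"
      using hm ord by (intro sum.cong refl) auto
    also have "\<dots> = (\<Sum>i\<in>{1..k}. \<Sum>j\<in>{1..k}.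
        (if j = i \<or> (i < k \<and> j = i + 1) \<or> (i = k \<and> j = 1) then -1 else 0))"
      unfolding W_def sum_W by (intro sum.cong refl) (auto simp: W_less_def W_elems_def hh_def intro!: sum.cong)
    also have "\<dots> = (\<Sum>i\<in>{1..k}. (-2::real))"
      using card_nb[OF assms(1)] by (intro sum.cong refl) auto
    also have "\<dots> = - 2 * real k" by simp
    finally show ?thesis .
  qed
  have f0: "fS h = 0" unfolding fS_def using sq dbl by simp
  have nz: "h \<noteq> (\<lambda>_. 0)"
  proof
    assume "h = (\<lambda>_. 0)"
    moreover have "(False, 1) \<in> W" using assms(1) by (simp add: W_def W_elems_def)
    ultimately show False using hm[of "(False, 1)"] by (simp add: hh_def)
  qed
  have "h \<in> Cset fS"
    unfolding Cset_def using sum0 nz zero_crit[OF assms(3) f0] by simp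
  then show ?thesis by blast
qed

end
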